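(* Let $\kappa$ be an infinite cardinal and $\mathcal{U}$ any fine ultrafilter on $\kappa$. Define $\Sigma:\mathbb{Z}^\kappa\to\mathbb{Z}^\kappa/\mathcal{U}$ by $\Sigma(\mathbf{x})=[\mathbf{f}_{\mathbf{x}}]_{\mathcal{U}}$, with $\mathbb{Z}$ embedded in the ultrapower via constant functions. Then $(\mathbb{Z}^\kappa/\mathcal{U},\Sigma)$ is a ring of Euclidean integers for $\kappa$, i.e. it satisfies (0), (RA), (LA), (CA) and (PA).
   Context: Every ordinal $\alpha$ has a unique base-2 normal form $\alpha=2^{\alpha_1}+\dots+2^{\alpha_n}$ with $\alpha_1>\dots>\alpha_n$; put $L_\alpha=\{\alpha_1,\dots,\alpha_n\}$. Formal inclusion: $\alpha\sqsubseteq\beta$ iff $L_\alpha\subseteq L_\beta$, $\alpha\sqsubset\beta$ iff $L_\alpha\subsetneq L_\beta$. $\alpha\vee\beta$ is the ordinal $\gamma$ with $L_\gamma=L_\alpha\cup L_\beta$. For $\theta<\kappa$ the cone is $C(\theta)=\{\alpha<\kappa\mid\theta\sqsubset\alpha\}$; a filter on $\kappa$ is fine if it contains all cones. For $\mathbf{x}\in\mathbb{Z}^\kappa$, $\mathbf{f}_{\mathbf{x}}(\alpha)=\sum_{\beta\sqsubseteq\alpha}x_\beta$. A ring of Euclidean integers for $\kappa$ is a discretely ordered commutative integral domain $\mathbf{Z}_\kappa$ containing $\mathbb{Z}$ as an ordered subring, together with a map $\Sigma:\mathbb{Z}^\kappa\to\mathbf{Z}_\kappa$, written $\Sigma(\mathbf{x})=\sum_\alpha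 x_\alpha$, such that: (0) if only finitely many $x_\alpha\neq0$ then $\sum_\alpha x_\alpha$ is the ordinary finite sum; (RA) every element of $\mathbf{Z}_\kappa$ is $\sum_\alpha x_\alpha$ for some $\mathbf{x}\in\mathbb{Z}^\kappa$; (LA) $u\sum_\alpha x_\alpha+v\sum_\alpha y_\alpha=\sum_\alpha(ux_\alpha+vy_\alpha)$ for all $u,v\in\mathbb{Z}$; (CA) if there is $\theta<\kappa$ with $\mathbf{f}_{\mathbf{x}}(\delta)\le\mathbf{f}_{\mathbf{y}}(\delta)$ for all $\delta<\kappa$ with $\theta\sqsubseteq\delta$, then $\sum_\alpha x_\alpha\le\sum_\alpha y_\alpha$; (PA) $(\sum_\alpha x_\alpha)(\sum_\beta y_\beta)=\sum_\gamma z_\gamma$ where $z_\gamma=\sum_{\alpha\vee\beta=\gamma}x_\alpha y_\beta$. *)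

theory Defs
  imports "HOL-Algebra.IntRing" "HOL-Library.FSet"
begin

text \<open>Ordinals below the infinite cardinal kappa are represented, via the canonical
bijection alpha |-> L_alpha (base-2 normal form exponents), by finite sets of
elements of a type 'a with |'a| = kappa.  Thus formal inclusion is |\<subseteq>|,
the join alpha \<or> beta is |\<union>|, and Z^kappa is the type 'a fset \<Rightarrow> int.\<close>

definition fine_filter :: "'a fset filter \<Rightarrow> bool" where
  "fine_filter U \<longleftrightarrow> (\<forall>\<theta>. eventually (\<lambda>\<alpha>. \<theta> |\<subset>| \<alpha>) U)"

definition is_ultrafilter :: "'i filter \<Rightarrow> bool" where
  "is_ultrafilter U \<longleftrightarrow> U \<noteq> bot \<and> (\<forall>P. eventually P U \<or> eventually (\<lambda>i. \<not> P i) U)"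

definition fsum :: "('a fset \<Rightarrow> int) \<Rightarrow> 'a fset \<Rightarrow> int" where
  "fsum x \<alpha> = (\<Sum>\<beta>\<in>{\<beta>. \<beta> |\<subseteq>| \<alpha>}. x \<beta>)"

definition conv_prod :: "('a fset \<Rightarrow> int) \<Rightarrow> ('a fset \<Rightarrow> int) \<Rightarrow> 'a fset \<Rightarrow> int" where
  "conv_prod x y \<gamma> = (\<Sum>p\<in>{(\<alpha>,\<beta>). \<alpha> |\<union>| \<beta> = \<gamma>}. x (fst p) * y (snd p))"

definition disc_ordered_domain ::
  "('r, 'm) ring_scheme \<Rightarrow> ('r \<Rightarrow> 'r \<Rightarrow> bool) \<Rightarrow> (int \<Rightarrow> 'r) \<Rightarrow> bool" where
  "disc_ordered_domain R leq e \<longleftrightarrow>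
     domain R \<and>
     (\<forall>a\<in>carrier R. leq a a) \<and>
     (\<forall>a\<in>carrier R. \<forall>b\<in>carrier R. leq a b \<and> leq b a \<longrightarrow> a = b) \<and>
     (\<forall>a\<in>carrier R. \<forall>b\<in>carrier R. \<forall>c\<in>carrier R. leq a b \<and> leq b c \<longrightarrow> leq a c) \<and>
     (\<forall>a\<in>carrier R. \<forall>b\<in>carrier R. leq a b \<or> leq b a) \<and>
     (\<forall>a\<in>carrier R. \<forall>b\<in>carrier R. \<forall>c\<in>carrier R. leq a b \<longrightarrow> leq (a \<oplus>\<^bsub>R\<^esub> c) (b \<oplus>\<^bsub>R\<^esub> c)) \<and>
     (\<forall>a\<in>carrier R. \<forall>b\<in>carrier R. leq \<zero>\<^bsub>R\<^esub> a \<and> leq \<zero>\<^bsub>R\<^esub> b \<longrightarrow> leq \<zero>\<^bsub>R\<^esub> (a \<otimes>\<^bsub>R\<^esub> b)) \<and>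
     (\<forall>a\<in>carrier R. leq \<zero>\<^bsub>R\<^esub> a \<and> a \<noteq> \<zero>\<^bsub>R\<^esub> \<longrightarrow> leq \<one>\<^bsub>R\<^esub> a) \<and>
     e \<in> ring_hom \<Z> R \<and> inj e \<and> (\<forall>m n. m \<le> n \<longleftrightarrow> leq (e m) (e n))"

definition ring_of_euclidean_integers ::
  "('r, 'm) ring_scheme \<Rightarrow> ('r \<Rightarrow> 'r \<Rightarrow> bool) \<Rightarrow> (int \<Rightarrow> 'r) \<Rightarrow> (('a fset \<Rightarrow> int) \<Rightarrow> 'r) \<Rightarrow> bool" where
  "ring_of_euclidean_integers R leq e S \<longleftrightarrow>
     disc_ordered_domain R leq e \<and>
     (\<forall>x. S x \<in> carrier R) \<and>
     \<comment> \<open>(0)\<close>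
     (\<forall>x. finite {\<alpha>. x \<alpha> \<noteq> 0} \<longrightarrow> S x = e (\<Sum>\<alpha>\<in>{\<alpha>. x \<alpha> \<noteq> 0}. x \<alpha>)) \<and>
     \<comment> \<open>(RA)\<close>
     (\<forall>r\<in>carrier R. \<exists>x. S x = r) \<and>
     \<comment> \<open>(LA)\<close>
     (\<forall>u v x y. (e u \<otimes>\<^bsub>R\<^esub> S x) \<oplus>\<^bsub>R\<^esub> (e v \<otimes>\<^bsub>R\<^esub> S y) = S (\<lambda>\<alpha>. u * x \<alpha> + v * y \<alpha>)) \<and>
     \<comment> \<open>(CA)\<close>
     (\<forall>x y. (\<exists>\<theta>. \<forall>\<delta>. \<theta> |\<subseteq>| \<delta> \<longrightarrow> fsum x \<delta> \<le> fsum y \<delta>) \<longrightarrow> leq (S x) (S y)) \<and>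
     \<comment> \<open>(PA)\<close>
     (\<forall>x y. S x \<otimes>\<^bsub>R\<^esub> S y = S (conv_prod x y))"

definition ultra_rel :: "'i filter \<Rightarrow> (('i \<Rightarrow> int) \<times> ('i \<Rightarrow> int)) set" where
  "ultra_rel U = {(f, g). eventually (\<lambda>i. f i = g i) U}"

definition uclass :: "'i filter \<Rightarrow> ('i \<Rightarrow> int) \<Rightarrow> ('i \<Rightarrow> int) set" where
  "uclass U f = ultra_rel U `` {f}"

definition urep :: "('i \<Rightarrow> int) set \<Rightarrow> 'i \<Rightarrow> int" where
  "urep A = (SOME f. f \<in> A)"

definition ultrapower :: "'i filter \<Rightarrow> ('i \<Rightarrow> int) set ring" where
  "ultrapower U = \<lparr>carrier = UNIV // ultra_rel U,
     mult = (\<lambda>A B. uclass U (\<lambda>i. urep A i * urep B i)),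
     one = uclass U (\<lambda>_. 1),
     zero = uclass U (\<lambda>_. 0),
     add = (\<lambda>A B. uclass U (\<lambda>i. urep A i + urep B i))\<rparr>"

definition ultra_le :: "'i filter \<Rightarrow> ('i \<Rightarrow> int) set \<Rightarrow> ('i \<Rightarrow> int) set \<Rightarrow> bool" where
  "ultra_le U A B \<longleftrightarrow> eventually (\<lambda>i. urep A i \<le> urep B i) U"

definition ultra_embed :: "'i filter \<Rightarrow> int \<Rightarrow> ('i \<Rightarrow> int) set" where
  "ultra_embed U n = uclass U (\<lambda>_. n)"

definition ultra_Sigma :: "'a fset filter \<Rightarrow> ('a fset \<Rightarrow> int) \<Rightarrow> ('a fset \<Rightarrow> int) set" where
  "ultra_Sigma U x = uclass U (fsum x)"

end

theory Submission imports Defs begin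

lemma equiv_ur: "equiv UNIV (ultra_rel U)"
  unfolding equiv_def refl_on_def sym_def trans_def ultra_rel_def
  by (auto elim: eventually_elim2 simp: eq_commute)

lemma cl_eq: "uclass U f = uclass U g \<longleftrightarrow> eventually (\<lambda>i. f i = g i) U"
  unfolding uclass_def using eq_equiv_class_iff[OF equiv_ur, of f g] by (simp add: ultra_rel_def)

lemma urep_cl: "eventually (\<lambda>i. urep (uclass U f) i = f i) U"
proof -
  have "f \<in> uclass U f" unfolding uclass_def using equiv_ur equiv_class_self by fastforce
  hence "urep (uclass U f) \<in> uclass U f" unfolding urep_def by (rule someI[of "\<lambda>x. x \<in> uclass U f"])
  thus ?thesis unfolding uclass_def ultra_rel_def by (auto elim: eventually_mono)
qed

lemma cl_urep: "uclass U (urep (uclass U f)) = uclass U f"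
  using urep_cl[of U f] cl_eq by blast

lemma carrier_iff: "A \<in> carrier (ultrapower U) \<longleftrightarrow> (\<exists>f. A = uclass U f)"
  unfolding ultrapower_def quotient_def uclass_def by auto

lemma add_cl: "uclass U f \<oplus>\<^bsub>ultrapower U\<^esub> uclass U g = uclass U (\<lambda>i. f i + g i)"
proof -
  have "eventually (\<lambda>i. urep (uclass U f) i + urep (uclass U g) i = f i + g i) U"
    using urep_cl[of U f] urep_cl[of U g] by (auto elim: eventually_elim2)
  thus ?thesis by (simp add: ultrapower_def cl_eq)
qed

lemma mult_cl: "uclass U f \<otimes>\<^bsub>ultrapower U\<^esub> uclass U g = uclass U (\<lambda>i. f i * g i)"
proof -
  have "eventually (\<lambda>i. urep (uclass U f) i * urep (uclass U g) i = f i * g i) U"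
    using urep_cl[of U f] urep_cl[of U g] by (auto elim: eventually_elim2)
  thus ?thesis by (simp add: ultrapower_def cl_eq)
qed

lemma zero_cl: "\<zero>\<^bsub>ultrapower U\<^esub> = uclass U (\<lambda>_. 0)" by (simp add: ultrapower_def)
lemma one_cl: "\<one>\<^bsub>ultrapower U\<^esub> = uclass U (\<lambda>_. 1)" by (simp add: ultrapower_def)

lemma cl_in: "uclass U f \<in> carrier (ultrapower U)" using carrier_iff by blast

lemma le_cl: "ultra_le U (uclass U f) (uclass U g) \<longleftrightarrow> eventually (\<lambda>i. f i \<le> g i) U"
proof -
  note A = urep_cl[of U f] and B = urep_cl[of U g]
  show ?thesis unfolding ultra_le_def
  proof
    assume "eventually (\<lambda>i. urep (uclass U f) i \<le> urep (uclass U g) i) U"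
    with A B show "eventually (\<lambda>i. f i \<le> g i) U" by eventually_elim auto
  next
    assume "eventually (\<lambda>i. f i \<le> g i) U"
    with A B show "eventually (\<lambda>i. urep (uclass U f) i \<le> urep (uclass U g) i) U" by eventually_elim auto
  qed
qed



lemma fin_sub: "finite {\<beta>. \<beta> |\<subseteq>| (\<alpha>::'a fset)}"
proof -
  have "{\<beta>. \<beta> |\<subseteq>| \<alpha>} = fset (fPow \<alpha>)" by auto
  thus ?thesis by simp
qed

lemma fin_psub: "finite {\<beta>. \<beta> |\<subset>| (\<alpha>::'a fset)}"
  by (rule finite_subset[OF _ fin_sub[of \<alpha>]]) auto

function mob :: "('a fset \<Rightarrow> int) \<Rightarrow> 'a fset \<Rightarrow> int" where
  "mob f \<alpha> = f \<alpha> - (\<Sum>\<beta>\<in>{\<beta>. \<beta> |\<subset>| \<alpha>}. mob f \<beta>)"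
  by auto
termination by (relation "measure (\<lambda>(f,\<alpha>). fcard \<alpha>)") (auto simp: pfsubset_fcard_mono)

declare mob.simps[simp del]

lemma fsum_mob: "(\<Sum>\<beta>\<in>{\<beta>. \<beta> |\<subseteq>| \<alpha>}. mob f \<beta>) = f \<alpha>"
proof -
  have "{\<beta>. \<beta> |\<subseteq>| \<alpha>} = insert \<alpha> {\<beta>. \<beta> |\<subset>| \<alpha>}" by auto
  thus ?thesis using fin_psub[of \<alpha>] by (simp add: mob.simps[of f \<alpha>])
qed

lemma ex_bound: "finite S \<Longrightarrow> \<exists>\<theta>. \<forall>\<beta>\<in>S. \<beta> |\<subseteq>| (\<theta>::'a fset)"
proof (induction S rule: finite_induct)
  case empty then show ?case by auto
next
  case (insert x F)
  then obtain \<theta> where "\<forall>\<beta>\<in>F. \<beta> |\<subseteq>| \<theta>" by auto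
  hence "\<forall>\<beta>\<in>insert x F. \<beta> |\<subseteq>| \<theta> |\<union>| x" by auto
  thus ?case by blast
qed

lemma fsum_prod:
  fixes x y :: "'a fset \<Rightarrow> int"
  shows "(\<Sum>\<gamma>\<in>{\<gamma>. \<gamma> |\<subseteq>| \<delta>}. (\<Sum>p\<in>{(\<alpha>,\<beta>). \<alpha> |\<union>| \<beta> = \<gamma>}. x (fst p) * y (snd p)))
     = (\<Sum>\<alpha>\<in>{\<alpha>. \<alpha> |\<subseteq>| \<delta>}. x \<alpha>) * (\<Sum>\<beta>\<in>{\<beta>. \<beta> |\<subseteq>| \<delta>}. y \<beta>)"
proof -
  let ?S = "{\<alpha>. \<alpha> |\<subseteq>| \<delta>} \<times> {\<beta>. \<beta> |\<subseteq>| \<delta>}"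
  let ?h = "\<lambda>p. x (fst p) * y (snd p)"
  have fS: "finite ?S" using fin_sub by blast
  have "(\<Sum>\<gamma>\<in>{\<gamma>. \<gamma> |\<subseteq>| \<delta>}. sum ?h {p\<in>?S. (\<lambda>(a,b). a |\<union>| b) p = \<gamma>}) = sum ?h ?S"
    by (rule sum.group[OF fS fin_sub]) auto
  moreover have "\<And>\<gamma>. \<gamma> \<in> {\<gamma>. \<gamma> |\<subseteq>| \<delta>} \<Longrightarrow> {p\<in>?S. (\<lambda>(a,b). a |\<union>| b) p = \<gamma>} = {(\<alpha>,\<beta>). \<alpha> |\<union>| \<beta> = \<gamma>}"
    by auto
  ultimately have "(\<Sum>\<gamma>\<in>{\<gamma>. \<gamma> |\<subseteq>| \<delta>}. sum ?h {(\<alpha>,\<beta>). \<alpha> |\<union>| \<beta> = \<gamma>}) = sum ?h ?S"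
    by (metis (no_types, lifting) sum.cong)
  also have "\<dots> = (\<Sum>\<alpha>\<in>{\<alpha>. \<alpha> |\<subseteq>| \<delta>}. \<Sum>\<beta>\<in>{\<beta>. \<beta> |\<subseteq>| \<delta>}. x \<alpha> * y \<beta>)"
    by (simp add: sum.cartesian_product split_def)
  also have "\<dots> = (\<Sum>\<alpha>\<in>{\<alpha>. \<alpha> |\<subseteq>| \<delta>}. x \<alpha>) * (\<Sum>\<beta>\<in>{\<beta>. \<beta> |\<subseteq>| \<delta>}. y \<beta>)"
    by (simp add: sum_product)
  finally show ?thesis .
qed


lemma uf_nbot: "is_ultrafilter U \<Longrightarrow> U \<noteq> bot" by (simp add: is_ultrafilter_def)
lemma uf_or: "is_ultrafilter U \<Longrightarrow> eventually P U \<or> eventually (\<lambda>i. \<not> P i) U"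
  by (simp add: is_ultrafilter_def)

lemma ev_const: assumes "is_ultrafilter U" shows "eventually (\<lambda>i. P) U \<longleftrightarrow> P"
  using uf_nbot[OF assms] by (cases P) auto

lemma domain_up:
  assumes UF: "is_ultrafilter U"
  shows "domain (ultrapower U)"
proof -
  have ag: "abelian_group (ultrapower U)"
  proof (rule abelian_groupI)
    fix x assume "x \<in> carrier (ultrapower U)"
    then obtain f where f: "x = uclass U f" by (auto simp: carrier_iff)
    show "\<exists>y\<in>carrier (ultrapower U). y \<oplus>\<^bsub>ultrapower U\<^esub> x = \<zero>\<^bsub>ultrapower U\<^esub>"
      by (rule bexI[of _ "uclass U (\<lambda>i. - f i)"]) (auto simp: f cl_in add_cl zero_cl)
  next
    show "\<zero>\<^bsub>ultrapower U\<^esub> \<in> carrier (ultrapower U)" by (simp add: zero_cl cl_in)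
  qed (auto simp: carrier_iff add_cl zero_cl cl_eq algebra_simps)
  have cm: "comm_monoid (ultrapower U)"
  proof (rule comm_monoidI)
    show "\<one>\<^bsub>ultrapower U\<^esub> \<in> carrier (ultrapower U)" by (simp add: one_cl cl_in)
  qed (auto simp: carrier_iff mult_cl one_cl cl_eq algebra_simps)
  have cr: "cring (ultrapower U)"
    by (rule cringI[OF ag cm]) (auto simp: carrier_iff mult_cl add_cl cl_eq algebra_simps)
  show ?thesis
  proof (rule domain.intro[OF cr], rule domain_axioms.intro)
    show "\<one>\<^bsub>ultrapower U\<^esub> \<noteq> \<zero>\<^bsub>ultrapower U\<^esub>"
      using uf_nbot[OF UF] by (simp add: one_cl zero_cl cl_eq)
  next
    fix a b assume ab: "a \<otimes>\<^bsub>ultrapower U\<^esub> b = \<zero>\<^bsub>ultrapower U\<^esub>"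
      "a \<in> carrier (ultrapower U)" "b \<in> carrier (ultrapower U)"
    then obtain f g where fg: "a = uclass U f" "b = uclass U g" by (auto simp: carrier_iff)
    with ab have e: "eventually (\<lambda>i. f i = 0 \<or> g i = 0) U"
      by (simp add: mult_cl zero_cl cl_eq)
    show "a = \<zero>\<^bsub>ultrapower U\<^esub> \<or> b = \<zero>\<^bsub>ultrapower U\<^esub>"
    proof (cases "eventually (\<lambda>i. f i = 0) U")
      case True thus ?thesis by (simp add: fg zero_cl cl_eq)
    next
      case False
      hence "eventually (\<lambda>i. f i \<noteq> 0) U" using uf_or[OF UF, of "\<lambda>i. f i = 0"] by auto
      with e have "eventually (\<lambda>i. g i = 0) U" by eventually_elim auto
      thus ?thesis by (simp add: fg zero_cl cl_eq)
    qed
  qed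
qed

lemma fine_sub: "fine_filter U \<Longrightarrow> eventually (\<lambda>\<delta>. \<theta> |\<subseteq>| \<delta>) U"
proof -
  assume "fine_filter U"
  hence "eventually (\<lambda>\<delta>. \<theta> |\<subset>| \<delta>) U" unfolding fine_filter_def by blast
  thus ?thesis by (rule eventually_mono) auto
qed

lemma fsum_finite:
  assumes "finite {\<alpha>. x \<alpha> \<noteq> 0}" "\<forall>\<beta>\<in>{\<alpha>. x \<alpha> \<noteq> 0}. \<beta> |\<subseteq>| \<delta>"
  shows "fsum x \<delta> = (\<Sum>\<alpha>\<in>{\<alpha>. x \<alpha> \<noteq> 0}. x \<alpha>)"
  unfolding fsum_def by (rule sum.mono_neutral_right[OF fin_sub]) (use assms in auto)

theorem mainTheorem3:
  fixes U :: "'a fset filter"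
  assumes "infinite (UNIV :: 'a set)"
    and "is_ultrafilter U"
    and "fine_filter U"
  shows "ring_of_euclidean_integers (ultrapower U) (ultra_le U) (ultra_embed U) (ultra_Sigma U)"
proof -
  note UF = assms(2) and FF = assms(3)
  note evc = ev_const[OF UF]
  let ?R = "ultrapower U"
  have dom: "disc_ordered_domain ?R (ultra_le U) (ultra_embed U)"
    unfolding disc_ordered_domain_def
  proof (intro conjI)
    show "domain ?R" by (rule domain_up[OF UF])
    show "\<forall>a\<in>carrier ?R. ultra_le U a a" by (auto simp: carrier_iff le_cl)
    show "\<forall>a\<in>carrier ?R. \<forall>b\<in>carrier ?R. ultra_le U a b \<and> ultra_le U b a \<longrightarrow> a = b"
    proof (clarsimp simp: carrier_iff le_cl cl_eq)
      fix f g :: "'a fset \<Rightarrow> int"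
      assume "eventually (\<lambda>i. f i \<le> g i) U" "eventually (\<lambda>i. g i \<le> f i) U"
      thus "eventually (\<lambda>i. f i = g i) U" by eventually_elim auto
    qed
    show "\<forall>a\<in>carrier ?R. \<forall>b\<in>carrier ?R. \<forall>c\<in>carrier ?R. ultra_le U a b \<and> ultra_le U b c \<longrightarrow> ultra_le U a c"
    proof (clarsimp simp: carrier_iff le_cl)
      fix f g h :: "'a fset \<Rightarrow> int"
      assume "eventually (\<lambda>i. f i \<le> g i) U" "eventually (\<lambda>i. g i \<le> h i) U"
      thus "eventually (\<lambda>i. f i \<le> h i) U" by eventually_elim auto
    qed
    show "\<forall>a\<in>carrier ?R. \<forall>b\<in>carrier ?R. ultra_le U a b \<or> ultra_le U b a"
    proof (clarsimp simp: carrier_iff le_cl)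
      fix f g :: "'a fset \<Rightarrow> int"
      assume "\<not> eventually (\<lambda>i. f i \<le> g i) U"
      hence "eventually (\<lambda>i. \<not> f i \<le> g i) U" using uf_or[OF UF, of "\<lambda>i. f i \<le> g i"] by auto
      thus "eventually (\<lambda>i. g i \<le> f i) U" by (auto elim: eventually_mono)
    qed
    show "\<forall>a\<in>carrier ?R. \<forall>b\<in>carrier ?R. \<forall>c\<in>carrier ?R. ultra_le U a b \<longrightarrow> ultra_le U (a \<oplus>\<^bsub>?R\<^esub> c) (b \<oplus>\<^bsub>?R\<^esub> c)"
      by (auto simp: carrier_iff le_cl add_cl elim: eventually_mono)
    show "\<forall>a\<in>carrier ?R. \<forall>b\<in>carrier ?R. ultra_le U \<zero>\<^bsub>?R\<^esub> a \<and> ultra_le U \<zero>\<^bsub>?R\<^esub> b \<longrightarrow> ultra_le U \<zero>\<^bsub>?R\<^esub> (a \<otimes>\<^bsub>?R\<^esub> b)"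
    proof (clarsimp simp: carrier_iff le_cl mult_cl zero_cl)
      fix f g :: "'a fset \<Rightarrow> int"
      assume "eventually (\<lambda>i. 0 \<le> f i) U" "eventually (\<lambda>i. 0 \<le> g i) U"
      thus "eventually (\<lambda>i. 0 \<le> f i * g i) U" by eventually_elim auto
    qed
    show "\<forall>a\<in>carrier ?R. ultra_le U \<zero>\<^bsub>?R\<^esub> a \<and> a \<noteq> \<zero>\<^bsub>?R\<^esub> \<longrightarrow> ultra_le U \<one>\<^bsub>?R\<^esub> a"
    proof (clarsimp simp: carrier_iff le_cl zero_cl one_cl cl_eq)
      fix f :: "'a fset \<Rightarrow> int"
      assume a: "eventually (\<lambda>i. 0 \<le> f i) U" "\<not> eventually (\<lambda>i. f i = 0) U"
      hence "eventually (\<lambda>i. f i \<noteq> 0) U" using uf_or[OF UF, of "\<lambda>i. f i = 0"] by auto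
      with a(1) show "eventually (\<lambda>i. 1 \<le> f i) U" by eventually_elim auto
    qed
    show "ultra_embed U \<in> ring_hom \<Z> ?R"
      by (rule ring_hom_memI) (auto simp: ultra_embed_def cl_in mult_cl add_cl one_cl)
    show "inj (ultra_embed U)"
      by (rule injI) (simp add: ultra_embed_def cl_eq evc)
    show "\<forall>m n. m \<le> n \<longleftrightarrow> ultra_le U (ultra_embed U m) (ultra_embed U n)"
      by (simp add: ultra_embed_def le_cl evc)
  qed
  show ?thesis
    unfolding ring_of_euclidean_integers_def
  proof (intro conjI dom)
    show "\<forall>x. ultra_Sigma U x \<in> carrier ?R" by (simp add: ultra_Sigma_def cl_in)
    show "\<forall>x. finite {\<alpha>. x \<alpha> \<noteq> 0} \<longrightarrow> ultra_Sigma U x = ultra_embed U (\<Sum>\<alpha>\<in>{\<alpha>. x \<alpha> \<noteq> 0}. x \<alpha>)"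
    proof (intro allI impI)
      fix x :: "'a fset \<Rightarrow> int" assume fin: "finite {\<alpha>. x \<alpha> \<noteq> 0}"
      then obtain \<theta> where th: "\<forall>\<beta>\<in>{\<alpha>. x \<alpha> \<noteq> 0}. \<beta> |\<subseteq>| \<theta>" using ex_bound by blast
      have "eventually (\<lambda>\<delta>. fsum x \<delta> = (\<Sum>\<alpha>\<in>{\<alpha>. x \<alpha> \<noteq> 0}. x \<alpha>)) U"
        using fine_sub[OF FF, of \<theta>]
      proof (rule eventually_mono)
        fix \<delta> assume "\<theta> |\<subseteq>| \<delta>"
        with th have "\<forall>\<beta>\<in>{\<alpha>. x \<alpha> \<noteq> 0}. \<beta> |\<subseteq>| \<delta>" by auto
        thus "fsum x \<delta> = (\<Sum>\<alpha>\<in>{\<alpha>. x \<alpha> \<noteq> 0}. x \<alpha>)" by (rule fsum_finite[OF fin])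
      qed
      thus "ultra_Sigma U x = ultra_embed U (\<Sum>\<alpha>\<in>{\<alpha>. x \<alpha> \<noteq> 0}. x \<alpha>)"
        by (simp add: ultra_Sigma_def ultra_embed_def cl_eq)
    qed
    show "\<forall>r\<in>carrier ?R. \<exists>x. ultra_Sigma U x = r"
    proof
      fix r assume "r \<in> carrier ?R"
      then obtain f where f: "r = uclass U f" by (auto simp: carrier_iff)
      have "fsum (mob f) = f" by (rule ext) (simp add: fsum_def fsum_mob)
      hence "ultra_Sigma U (mob f) = r" by (simp add: ultra_Sigma_def f)
      thus "\<exists>x. ultra_Sigma U x = r" by blast
    qed
    show "\<forall>u v x y. ultra_embed U u \<otimes>\<^bsub>?R\<^esub> ultra_Sigma U x \<oplus>\<^bsub>?R\<^esub> ultra_embed U v \<otimes>\<^bsub>?R\<^esub> ultra_Sigma U y =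
        ultra_Sigma U (\<lambda>\<alpha>. u * x \<alpha> + v * y \<alpha>)"
    proof (intro allI)
      fix u v and x y :: "'a fset \<Rightarrow> int"
      have "(\<lambda>i. u * fsum x i + v * fsum y i) = fsum (\<lambda>\<alpha>. u * x \<alpha> + v * y \<alpha>)"
        by (rule ext) (simp add: fsum_def sum.distrib sum_distrib_left)
      thus "ultra_embed U u \<otimes>\<^bsub>?R\<^esub> ultra_Sigma U x \<oplus>\<^bsub>?R\<^esub> ultra_embed U v \<otimes>\<^bsub>?R\<^esub> ultra_Sigma U y =
        ultra_Sigma U (\<lambda>\<alpha>. u * x \<alpha> + v * y \<alpha>)"
        by (simp add: ultra_embed_def ultra_Sigma_def mult_cl add_cl)
    qed
    show "\<forall>x y. (\<exists>\<theta>. \<forall>\<delta>. \<theta> |\<subseteq>| \<delta> \<longrightarrow> fsum x \<delta> \<le> fsum y \<delta>) \<longrightarrow> ultra_le U (ultra_Sigma U x) (ultra_Sigma U y)"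
    proof (intro allI impI)
      fix x y :: "'a fset \<Rightarrow> int"
      assume "\<exists>\<theta>. \<forall>\<delta>. \<theta> |\<subseteq>| \<delta> \<longrightarrow> fsum x \<delta> \<le> fsum y \<delta>"
      then obtain \<theta> where th: "\<forall>\<delta>. \<theta> |\<subseteq>| \<delta> \<longrightarrow> fsum x \<delta> \<le> fsum y \<delta>" by blast
      have "eventually (\<lambda>\<delta>. fsum x \<delta> \<le> fsum y \<delta>) U"
        using fine_sub[OF FF, of \<theta>] by (rule eventually_mono) (use th in blast)
      thus "ultra_le U (ultra_Sigma U x) (ultra_Sigma U y)" by (simp add: ultra_Sigma_def le_cl)
    qed
    show "\<forall>x y. ultra_Sigma U x \<otimes>\<^bsub>?R\<^esub> ultra_Sigma U y = ultra_Sigma U (conv_prod x y)"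
    proof (intro allI)
      fix x y :: "'a fset \<Rightarrow> int"
      have "(\<lambda>i. fsum x i * fsum y i) = fsum (conv_prod x y)"
        by (rule ext) (simp add: fsum_def conv_prod_def fsum_prod)
      thus "ultra_Sigma U x \<otimes>\<^bsub>?R\<^esub> ultra_Sigma U y = ultra_Sigma U (conv_prod x y)"
        by (simp add: ultra_Sigma_def mult_cl)
    qed
  qed
qed

end
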